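(* Let $d>0$, let $\ell$ be a certified lower bound with certificate matrix $\Lambda$, and suppose $f(d,\ell)=1$. Suppose $j\in\{1,\dots,m\}$ satisfies $0<a_j^\top y(d,\ell)-u_j\le\gamma_j(d,\ell)$. Define $$\ell^{(1)}:=\ell-\frac{2(t_j(d,\ell)-v_j(\ell))}{d_j\gamma_j(d,\ell)^2}e_j .$$ Then $\ell^{(1)}$ is a certified lower bound with certificate matrix $\Lambda$, $a_j^\top y(d,\ell^{(1)})=u_j$, and $$f(d,\ell^{(1)})=1-\Big(\frac{a_j^\top y(d,\ell)-u_j}{\gamma_j(d,\ell)}\Big)^2<1 .$$
   Context: Standing assumption: $A=[a_1|\cdots|a_m]\in\mathbb{R}^{n\times m}$ has columns of unit Euclidean norm and $\{A\lambda:\lambda\ge0\}=\mathbb{R}^n$; $u\in\mathbb{R}^m$. $D=\mathrm{diag}(d)$; $r(\ell)=\tfrac12(u+\ell)$, $v(\ell)=\tfrac12(u-\ell)$, $B(d)=ADA^\top$, $y(d,\ell)=B(d)^{-1}ADr(\ell)$, $t(d,\ell)=A^\top y(d,\ell)-r(\ell)$, $f(d,\ell)=v(\ell)^\top Dv(\ell)-t(d,\ell)^\top Dt(d,\ell)$, $\gamma_i(d,\ell)=\sqrt{f(d,\ell)a_i^\top B(d)^{-1}a_i}$ when $f(d,\ell)>0$. $\ell$ is a certified lower bound with certificate matrix $\Lambda\in\mathbb{R}^{m\times m}$ if $A\Lambda=-A$, $\Lambda\ge0$, $-\Lambda^\top u\ge\ell$. *)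

theory Defs
  imports "HOL-Analysis.Analysis"
begin

text \<open>Data: A has n rows (index type 'n) and m columns (index type 'm); u, d, l are in R^m.\<close>

definition diagm :: "real^'m \<Rightarrow> real^'m^'m" where
  "diagm d = (\<chi> i j. if i = j then d $ i else 0)"

definition rvec :: "real^'m \<Rightarrow> real^'m \<Rightarrow> real^'m" where
  "rvec u l = (1/2) *\<^sub>R (u + l)"

definition vvec :: "real^'m \<Rightarrow> real^'m \<Rightarrow> real^'m" where
  "vvec u l = (1/2) *\<^sub>R (u - l)"

definition Bmat :: "real^'m^'n \<Rightarrow> real^'m \<Rightarrow> real^'n^'n" where
  "Bmat A d = A ** diagm d ** transpose A"

definition yvec :: "real^'m^'n \<Rightarrow> real^'m \<Rightarrow> real^'m \<Rightarrow> real^'m \<Rightarrow> real^'n" where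
  "yvec A u d l = matrix_inv (Bmat A d) *v (A *v (diagm d *v rvec u l))"

definition tvec :: "real^'m^'n \<Rightarrow> real^'m \<Rightarrow> real^'m \<Rightarrow> real^'m \<Rightarrow> real^'m" where
  "tvec A u d l = transpose A *v yvec A u d l - rvec u l"

definition fval :: "real^'m^'n \<Rightarrow> real^'m \<Rightarrow> real^'m \<Rightarrow> real^'m \<Rightarrow> real" where
  "fval A u d l = vvec u l \<bullet> (diagm d *v vvec u l) - tvec A u d l \<bullet> (diagm d *v tvec A u d l)"

text \<open>gamma_i, meaningful only when f(d,l) > 0.\<close>
definition gam :: "real^'m^'n \<Rightarrow> real^'m \<Rightarrow> real^'m \<Rightarrow> real^'m \<Rightarrow> 'm \<Rightarrow> real" where
  "gam A u d l i = sqrt (fval A u d l * (column i A \<bullet> (matrix_inv (Bmat A d) *v column i A)))"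

definition certified_lb :: "real^'m^'n \<Rightarrow> real^'m \<Rightarrow> real^'m \<Rightarrow> real^'m^'m \<Rightarrow> bool" where
  "certified_lb A u l \<Lambda> \<longleftrightarrow> A ** \<Lambda> = - A \<and> (\<forall>i j. \<Lambda> $ i $ j \<ge> 0)
     \<and> (\<forall>i. (- (transpose \<Lambda> *v u)) $ i \<ge> l $ i)"

end

theory Submission
  imports Defs
begin

lemma inner_transp: "(transpose A *v x) \<bullet> (y::real^'m) = (x::real^'n) \<bullet> (A *v y)"
  by (simp add: dot_lmul_matrix)

lemma diagm_mult: "diagm d *v x = (\<chi> i. d $ i * x $ i)"
proof -
  have "\<And>i. (\<Sum>k\<in>UNIV. (if i = k then d $ i else 0) * x $ k) = d $ i * x $ i"
  proof -
    fix i
    have e: "\<And>k. (if i = k then d $ i else 0) * x $ k = (if i = k then d $ i * x $ i else 0)" by auto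
    show "(\<Sum>k\<in>UNIV. (if i = k then d $ i else 0) * x $ k) = d $ i * x $ i"
      by (simp only: e sum.delta) simp
  qed
  then show ?thesis by (simp add: diagm_def matrix_vector_mult_def vec_eq_iff)
qed

lemma Q_sum: "x \<bullet> (diagm d *v y) = (\<Sum>i\<in>UNIV. d $ i * x $ i * y $ i)"
  by (simp add: diagm_mult inner_vec_def mult.commute mult.left_commute)

lemma Q_sym: "x \<bullet> (diagm d *v y) = y \<bullet> (diagm d *v x)"
  by (simp add: Q_sum mult.commute mult.left_commute)

lemma Q_expand: "(x + s *\<^sub>R z) \<bullet> (diagm d *v (x + s *\<^sub>R z)) =
   x \<bullet> (diagm d *v x) + 2 * s * (x \<bullet> (diagm d *v z)) + s^2 * (z \<bullet> (diagm d *v z))"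
  by (simp add: Q_sum power2_eq_square algebra_simps sum.distrib sum_distrib_left)

lemma Q_axis: "x \<bullet> (diagm d *v axis j 1) = d $ j * x $ j"
proof -
  have e: "\<And>i. d $ i * x $ i * axis j 1 $ i = (if j = i then d $ j * x $ j else 0)" by (auto simp: axis_def)
  show ?thesis by (simp only: Q_sum e sum.delta) simp
qed

lemma Q_nonneg: "\<forall>i. d $ i > 0 \<Longrightarrow> x \<bullet> (diagm d *v x) \<ge> 0"
  unfolding Q_sum by (intro sum_nonneg) (simp add: mult.assoc less_imp_le)

lemma Q_zero: "\<forall>i. d $ i > 0 \<Longrightarrow> x \<bullet> (diagm d *v x) = 0 \<Longrightarrow> x = 0"
proof -
  assume d: "\<forall>i. d $ i > 0" and q: "x \<bullet> (diagm d *v x) = 0"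
  have "(\<Sum>i\<in>UNIV. d $ i * x $ i * x $ i) = 0" using q by (simp add: Q_sum)
  moreover have "\<forall>i\<in>UNIV. 0 \<le> d $ i * x $ i * x $ i" using d
    by (metis less_imp_le mult.assoc mult_nonneg_nonneg zero_le_square)
  ultimately have "\<forall>i\<in>UNIV. d $ i * x $ i * x $ i = 0" by (simp add: sum_nonneg_eq_0_iff)
  then show "x = 0" using d by (simp add: vec_eq_iff) (metis less_irrefl)
qed

lemma B_apply: "Bmat A d *v x = A *v (diagm d *v (transpose A *v x))"
  by (simp add: Bmat_def matrix_vector_mul_assoc matrix_mul_assoc del: transpose_matrix_vector)

lemma transp_comp: "(transpose A *v x) $ j = column j A \<bullet> x"
  by (simp add: column_def inner_vec_def matrix_vector_mult_def transpose_def mult.commute)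

lemma matrix_inv_works:
  assumes "invertible (M::real^'n^'n)"
  shows "M ** matrix_inv M = mat 1 \<and> matrix_inv M ** M = mat 1"
  using assms unfolding invertible_def matrix_inv_def by (rule someI_ex)


theorem lemma5:
  fixes A :: "real^'m^'n" and u d l :: "real^'m" and \<Lambda> :: "real^'m^'m" and j :: 'm
  assumes unit_cols: "\<forall>i. norm (column i A) = 1"
    and cone: "{A *v w | w. \<forall>i. w $ i \<ge> 0} = UNIV"
    and dpos: "\<forall>i. d $ i > 0"
    and cert: "certified_lb A u l \<Lambda>"
    and f1: "fval A u d l = 1"
    and jpos: "0 < column j A \<bullet> yvec A u d l - u $ j"
    and jle: "column j A \<bullet> yvec A u d l - u $ j \<le> gam A u d l j"
  defines "l1 \<equiv> l - (2 * (tvec A u d l $ j - vvec u l $ j) / (d $ j * (gam A u d l j)\<^sup>2)) *\<^sub>R axis j 1"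
  shows "certified_lb A u l1 \<Lambda>
    \<and> column j A \<bullet> yvec A u d l1 = u $ j
    \<and> fval A u d l1 = 1 - ((column j A \<bullet> yvec A u d l - u $ j) / gam A u d l j)\<^sup>2
    \<and> fval A u d l1 < 1"
proof -
  define a where "a = column j A"
  define B where "B = Bmat A d"
  define Bi where "Bi = matrix_inv B"
  define D where "D = diagm d"
  define y where "y = yvec A u d l"
  define t where "t = tvec A u d l"
  define h where "h = Bi *v a"
  define g where "g = a \<bullet> h"
  define p where "p = transpose A *v h"
  define w where "w = a \<bullet> y - u $ j"
  define e where "e = (axis j 1 :: real^'m)"
  have Binj: "\<forall>x. B *v x = 0 \<longrightarrow> x = 0"
  proof (intro allI impI)
    fix x assume Bx: "B *v x = 0"
    have "x \<bullet> (B *v x) = (transpose A *v x) \<bullet> (D *v (transpose A *v x))"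
      by (simp only: B_def D_def B_apply inner_transp)
    then have "(transpose A *v x) \<bullet> (D *v (transpose A *v x)) = 0" using Bx by simp
    then have tx: "transpose A *v x = 0" using Q_zero dpos D_def by blast
    from cone obtain w0 where "x = A *v w0" by blast
    then have "x \<bullet> x = (transpose A *v x) \<bullet> w0" by (simp only: inner_transp)
    then show "x = 0" using tx by simp
  qed
  then have "invertible B" using matrix_left_invertible_ker invertible_left_inverse by blast
  then have BBi: "B ** Bi = mat 1" and BiB: "Bi ** B = mat 1" using matrix_inv_works Bi_def by blast+
  have BBv: "\<And>z. B *v (Bi *v z) = z" using BBi by (simp add: matrix_vector_mul_assoc)
  have Bh: "B *v h = a" using BBv by (simp add: h_def)
  have ADt: "A *v (D *v t) = 0"
  proof -
    have "A *v (D *v t) = B *v y - A *v (D *v rvec u l)"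
      by (simp add: t_def tvec_def B_def D_def B_apply matrix_vector_mult_diff_distrib y_def
          del: transpose_matrix_vector)
    also have "B *v y = A *v (D *v rvec u l)"
      unfolding y_def yvec_def B_def[symmetric] Bi_def[symmetric] D_def[symmetric] by (rule BBv)
    finally show ?thesis by simp
  qed
  have gQ: "g = p \<bullet> (D *v p)"
  proof -
    have "p \<bullet> (D *v p) = h \<bullet> (B *v h)"
      by (simp only: p_def B_def D_def B_apply inner_transp)
    then show ?thesis using Bh by (simp add: g_def inner_commute)
  qed
  have gpos: "g > 0"
  proof -
    have "g \<ge> 0" using gQ Q_nonneg dpos D_def by simp
    moreover have "g \<noteq> 0"
    proof
      assume "g = 0"
      then have "p = 0" using gQ Q_zero dpos D_def by metis
      then have "B *v h = 0" by (simp add: B_def B_apply p_def del: transpose_matrix_vector)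
      then have "a = 0" using Bh by simp
      then show False using unit_cols a_def by (metis norm_zero zero_neq_one)
    qed
    ultimately show ?thesis by simp
  qed
  have gam2: "(gam A u d l j)\<^sup>2 = g"
    using f1 gpos by (simp add: gam_def g_def h_def a_def Bi_def B_def)
  have wtv: "tvec A u d l $ j - vvec u l $ j = w"
    by (simp add: tvec_def transp_comp w_def a_def y_def rvec_def vvec_def
        del: transpose_matrix_vector) (simp add: algebra_simps)
  define s where "s = w / (d $ j * g)"
  have dj: "d $ j > 0" using dpos by simp
  have l1s: "l1 = l - (2 * s) *\<^sub>R e"
    unfolding l1_def wtv gam2 s_def e_def by simp
  have spos: "s > 0" using jpos gpos dj by (simp add: s_def w_def a_def y_def)
  have r1: "rvec u l1 = rvec u l - s *\<^sub>R e"
    by (simp add: rvec_def l1s algebra_simps)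
  have v1: "vvec u l1 = vvec u l + s *\<^sub>R e"
    by (simp add: vvec_def l1s algebra_simps)
  have De: "D *v e = d $ j *\<^sub>R e"
    by (simp add: D_def e_def diagm_mult vec_eq_iff axis_def)
  have Ae: "A *v e = a" by (simp add: e_def a_def matrix_vector_mult_basis)
  have y1: "yvec A u d l1 = y - (s * d $ j) *\<^sub>R h"
    by (simp add: yvec_def r1 matrix_vector_mult_diff_distrib De[unfolded D_def]
        matrix_vector_mult_scaleR Ae[unfolded a_def] y_def h_def Bi_def B_def a_def)
  have sdg: "s * d $ j * g = w" using dj gpos by (simp add: s_def)
  have ay1: "a \<bullet> yvec A u d l1 = u $ j"
    using sdg by (simp add: y1 inner_diff_right g_def[symmetric] w_def)
  have t1: "tvec A u d l1 = t + s *\<^sub>R (e - d $ j *\<^sub>R p)"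
    by (simp add: tvec_def y1 r1 t_def p_def y_def matrix_vector_mult_diff_distrib
        matrix_vector_mult_scaleR algebra_simps del: transpose_matrix_vector)
  have tDp: "t \<bullet> (D *v p) = 0"
  proof -
    have "t \<bullet> (D *v p) = p \<bullet> (D *v t)" using Q_sym D_def by metis
    also have "\<dots> = h \<bullet> (A *v (D *v t))" by (simp only: p_def inner_transp)
    finally show ?thesis using ADt by simp
  qed
  have pj: "p $ j = g" by (simp only: p_def transp_comp g_def a_def)
  have Qxe: "\<And>x. x \<bullet> (D *v e) = d $ j * x $ j" by (simp add: D_def e_def Q_axis)
  have Qex: "\<And>x. e \<bullet> (D *v x) = d $ j * x $ j" using Qxe Q_sym D_def by metis
  have ee: "e \<bullet> (D *v e) = d $ j" using Qxe[of e] by (simp add: e_def)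
  have QDdiff: "(e - d $ j *\<^sub>R p) \<bullet> (D *v (e - d $ j *\<^sub>R p)) = d $ j - (d $ j)^2 * g"
  proof -
    have "(e - d $ j *\<^sub>R p) = e + (- d $ j) *\<^sub>R p" by simp
    then have "(e - d $ j *\<^sub>R p) \<bullet> (D *v (e - d $ j *\<^sub>R p)) =
       e \<bullet> (D *v e) + 2 * (- d $ j) * (e \<bullet> (D *v p)) + (- d $ j)^2 * (p \<bullet> (D *v p))"
      using Q_expand D_def by metis
    then show ?thesis using ee Qex[of p] pj gQ by (simp add: power2_eq_square)
  qed
  have tD: "t \<bullet> (D *v (e - d $ j *\<^sub>R p)) = d $ j * t $ j"
    using tDp Qxe by (simp add: matrix_vector_mult_diff_distrib matrix_vector_mult_scaleR inner_diff_right)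
  have ft1: "tvec A u d l1 \<bullet> (D *v tvec A u d l1) = t \<bullet> (D *v t) + 2 * s * (d $ j * t $ j)
      + s^2 * (d $ j - (d $ j)^2 * g)"
    using Q_expand[of t s "e - d $ j *\<^sub>R p" d] tD QDdiff unfolding t1 D_def by simp
  have fv1: "vvec u l1 \<bullet> (D *v vvec u l1) = vvec u l \<bullet> (D *v vvec u l) + 2 * s * (d $ j * vvec u l $ j)
      + s^2 * d $ j"
    using Q_expand[of "vvec u l" s e d] Qxe[of "vvec u l"] ee unfolding v1 D_def by simp
  have tj: "t $ j - vvec u l $ j = w" using wtv t_def by simp
  have fl1: "fval A u d l1 = 1 - w^2 / g"
  proof -
    have "fval A u d l1 = fval A u d l - 2 * s * d $ j * (t $ j - vvec u l $ j) + s^2 * (d $ j)^2 * g"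
      unfolding fval_def using fv1 ft1 by (simp add: D_def t_def algebra_simps power2_eq_square)
    also have "\<dots> = 1 - w^2 / g" using f1 tj dj gpos
      by (simp add: s_def field_simps power2_eq_square)
    finally show ?thesis .
  qed
  have gamsq: "(w / gam A u d l j)^2 = w^2 / g" using gam2 by (simp add: power_divide)
  have cert1: "certified_lb A u l1 \<Lambda>"
    using cert spos unfolding certified_lb_def l1s
    by (auto simp: e_def axis_def) (smt (verit))
  show ?thesis
    using cert1 ay1 fl1 gamsq gpos jpos
    by (simp add: a_def w_def y_def)
qed

end
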